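(* Let $X\in L_2^p(P)$ be centered with $\Sigma=\mathrm{Cov}(X)$, let $\varepsilon\in L_2^q(P)$ be centered with $V=\mathrm{Cov}(\varepsilon)$ and stochastically independent of $X$, let $Z\in\mathbb R^{q\times p}$ and $Y=ZX+\varepsilon$. Put $C=\mathrm{Cov}(Y)=Z\Sigma Z^\tau+V$, $K=\Sigma Z^\tau C^-$, $B=Z\Sigma Z^\tau$ and $Z^\Sigma=\Sigma Z^\tau B^-$. Then for every symmetric positive definite $D\in\mathbb R^{p\times p}$, the matrix $A=Z^\Sigma$ solves $$\mathrm E\,\|X-A\,\mathrm{oP}(ZX\,|\,Y)\|_D^2=\min!,\qquad A\in\mathbb R^{p\times q},$$ where $\mathrm{oP}(ZX\,|\,Y)=ZKY$. No rank assumptions on $Z$, $\Sigma$, $B$ or $C$ are made.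
   Context: $M^-$ denotes the Moore–Penrose generalized inverse of a matrix $M$. For symmetric positive (semi-)definite $D$, $\|x\|_D^2:=x^\tau D^-x$. For random vectors $a,b$ in $L_2$, $\mathrm{oP}(a\,|\,b)$ denotes the best linear reconstruction of $a$ by means of $b$, i.e. the componentwise orthogonal $L_2$-projection of $a$ onto the closed linear span of the components of $b$; here $\mathrm{oP}(X|Y)=KY$ and $\mathrm{oP}(ZX|Y)=ZKY$. *)

theory Defs
  imports "HOL-Probability.Probability"
begin

definition mp_inverse :: "real^'n^'m \<Rightarrow> real^'m^'n" where
  "mp_inverse A = (THE G. A ** G ** A = A \<and> G ** A ** G = G \<and>
      transpose (A ** G) = A ** G \<and> transpose (G ** A) = G ** A)"

definition cov_mat :: "'a measure \<Rightarrow> ('a \<Rightarrow> real^'n) \<Rightarrow> real^'n^'n" where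
  "cov_mat M X = (\<chi> i j. integral\<^sup>L M (\<lambda>\<omega>. (X \<omega> $ i - integral\<^sup>L M (\<lambda>\<omega>. X \<omega> $ i))
                                         * (X \<omega> $ j - integral\<^sup>L M (\<lambda>\<omega>. X \<omega> $ j))))"

definition L2_vec :: "'a measure \<Rightarrow> ('a \<Rightarrow> real^'n) \<Rightarrow> bool" where
  "L2_vec M X \<longleftrightarrow> X \<in> borel_measurable M \<and> (\<forall>i. integrable M (\<lambda>\<omega>. (X \<omega> $ i)\<^sup>2))"

definition Dnorm_sq :: "real^'n^'n \<Rightarrow> real^'n \<Rightarrow> real" where
  "Dnorm_sq D x = x \<bullet> (mp_inverse D *v x)"

end

theory Submission
  imports Defs
begin


definition penrose :: "real^'n^'m \<Rightarrow> real^'m^'n \<Rightarrow> bool" where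
  "penrose A G \<longleftrightarrow> A ** G ** A = A \<and> G ** A ** G = G \<and>
      transpose (A ** G) = A ** G \<and> transpose (G ** A) = G ** A"

lemma sym_by_inner:
  fixes M :: "real^'n^'n"
  assumes "\<And>x y. (M *v x) \<bullet> y = x \<bullet> (M *v y)"
  shows "transpose M = M"
proof -
  have "transpose M *v y = M *v y" for y
  proof -
    have "\<forall>x. x \<bullet> (transpose M *v y - M *v y) = 0"
      using assms by (simp add: inner_diff_right dot_lmul_matrix[symmetric] inner_commute)
    then show ?thesis by (metis inner_eq_zero_iff right_minus_eq)
  qed
  then show ?thesis by (simp add: matrix_eq)
qed

lemma proj_exists:
  fixes U :: "'a::euclidean_space set"
  assumes "subspace U"
  obtains P where "\<And>x. P x \<in> U" "\<And>x w. w \<in> U \<Longrightarrow> (x - P x) \<bullet> w = 0"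
proof -
  have "\<forall>x. \<exists>y. y \<in> U \<and> (\<forall>w\<in>U. (x - y) \<bullet> w = 0)"
  proof
    fix x
    obtain y z where "y \<in> span U" "\<And>w. w \<in> span U \<Longrightarrow> orthogonal z w" "x = y + z"
      using orthogonal_subspace_decomp_exists by blast
    then show "\<exists>y. y \<in> U \<and> (\<forall>w\<in>U. (x - y) \<bullet> w = 0)"
    proof -
      have hU: "span U = U" using assms by (simp add: span_eq_iff)
      have "y \<in> U" using hU \<open>y \<in> span U\<close> by metis
      moreover have "\<forall>w\<in>U. (x - y) \<bullet> w = 0"
        using hU \<open>\<And>w. w \<in> span U \<Longrightarrow> orthogonal z w\<close> \<open>x = y + z\<close> by (metis add_diff_cancel_left' orthogonal_def)
      ultimately show ?thesis by blast
    qed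
  qed
  then show ?thesis using that by metis
qed

lemma proj_unique:
  fixes U :: "'a::euclidean_space set"
  assumes "subspace U" "y \<in> U" "\<And>w. w \<in> U \<Longrightarrow> (x - y) \<bullet> w = 0"
    "z \<in> U" "\<And>w. w \<in> U \<Longrightarrow> (x - z) \<bullet> w = 0"
  shows "y = z"
proof -
  have "z - y \<in> U" using assms subspace_diff by blast
  then have "(x - y) \<bullet> (z - y) = 0" "(x - z) \<bullet> (z - y) = 0" using assms by auto
  then have "(z - y) \<bullet> (z - y) = 0" by (simp add: inner_diff_left inner_diff_right)
  then show ?thesis by simp
qed

lemma proj_sym:
  fixes U :: "'a::euclidean_space set"
  assumes "\<And>x. P x \<in> U" "\<And>x w. w \<in> U \<Longrightarrow> (x - P x) \<bullet> w = 0"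
  shows "P x \<bullet> y = x \<bullet> P y"
proof -
  have "P x \<bullet> y = P x \<bullet> P y"
    using assms(2)[of "P x" y] assms(1)[of x] by (simp add: inner_diff_left inner_diff_right inner_commute)
  moreover have "x \<bullet> P y = P x \<bullet> P y"
    using assms(2)[of "P y" x] assms(1)[of y] by (simp add: inner_diff_left inner_diff_right inner_commute)
  ultimately show ?thesis by simp
qed

lemma penrose_exists:
  fixes A :: "real^'n^'m"
  shows "\<exists>G. penrose A G"
proof -
  define V where "V = range (\<lambda>x. A *v x)"
  define S where "S = range (\<lambda>y. transpose A *v y)"
  have sr: "subspace (range (\<lambda>x. B *v x))" for B :: "real^'a^'b"
    unfolding subspace_def
  proof (intro conjI ballI allI)
    show "0 \<in> range (\<lambda>x. B *v x)" by (rule range_eqI[of _ _ 0]) simp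
    fix u v assume "u \<in> range (\<lambda>x. B *v x)" "v \<in> range (\<lambda>x. B *v x)"
    then obtain a b where "u = B *v a" "v = B *v b" by blast
    then show "u + v \<in> range (\<lambda>x. B *v x)"
      by (intro range_eqI[of _ _ "a+b"]) (simp add: matrix_vector_right_distrib)
  next
    fix c :: real and u assume "u \<in> range (\<lambda>x. B *v x)"
    then obtain a where "u = B *v a" by blast
    then show "c *\<^sub>R u \<in> range (\<lambda>x. B *v x)"
      by (intro range_eqI[of _ _ "c *\<^sub>R a"]) (simp add: linear_simps matrix_vector_mul_linear)
  qed
  obtain p where p1: "\<And>y. p y \<in> V" and p2: "\<And>y w. w \<in> V \<Longrightarrow> (y - p y) \<bullet> w = 0"
    using proj_exists[OF sr[of A, folded V_def]] by blast
  obtain r where r1: "\<And>y. r y \<in> S" and r2: "\<And>y w. w \<in> S \<Longrightarrow> (y - r y) \<bullet> w = 0"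
    using proj_exists[OF sr[of "transpose A", folded S_def]] by blast
  have sV: "subspace V" "subspace S" unfolding V_def S_def by (rule sr)+
  have ker: "A *v t = 0" if "\<And>w. w \<in> S \<Longrightarrow> t \<bullet> w = 0" for t
  proof -
    have "transpose A *v (A *v t) \<in> S" unfolding S_def by simp
    then have "t \<bullet> (transpose A *v (A *v t)) = 0" using that by blast
    then have "(A *v t) \<bullet> (A *v t) = 0"
      by (simp add: dot_lmul_matrix[symmetric] inner_commute)
    then show ?thesis by simp
  qed
  have Ar: "A *v r x = A *v x" for x
  proof -
    have "A *v (x - r x) = 0" using ker r2 by blast
    then show ?thesis by (simp add: matrix_vector_mult_diff_distrib)
  qed
  have injS: "s = 0" if "s \<in> S" "A *v s = 0" for s
  proof -
    obtain z where z: "s = transpose A *v z" using \<open>s \<in> S\<close> unfolding S_def by blast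
    have "s \<bullet> s = z \<bullet> (A *v s)" by (simp add: z dot_lmul_matrix[symmetric])
    then show ?thesis using that by simp
  qed
  have pch: "z = p y" if "z \<in> V" "\<And>w. w \<in> V \<Longrightarrow> (y - z) \<bullet> w = 0" for y z
    using proj_unique[OF sV(1) that] p1 p2 by blast
  have rch: "z = r y" if "z \<in> S" "\<And>w. w \<in> S \<Longrightarrow> (y - z) \<bullet> w = 0" for y z
    using proj_unique[OF sV(2) that] r1 r2 by blast
  define g where "g y = r (SOME x. A *v x = p y)" for y
  have g1: "g y \<in> S" for y unfolding g_def by (rule r1)
  have g2: "A *v g y = p y" for y
  proof -
    have "\<exists>x. A *v x = p y" using p1[of y] unfolding V_def by auto
    then have "A *v (SOME x. A *v x = p y) = p y" by (rule someI_ex)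
    then show ?thesis unfolding g_def using Ar by simp
  qed
  have gch: "s = g y" if "s \<in> S" "A *v s = p y" for s y
  proof -
    have "s - g y \<in> S" using that g1 sV(2) subspace_diff by blast
    moreover have "A *v (s - g y) = 0" using that g2 by (simp add: matrix_vector_mult_diff_distrib)
    ultimately show ?thesis using injS by fastforce
  qed
  have plin: "p (a + b) = p a + p b" "p (c *\<^sub>R a) = c *\<^sub>R p a" for a b c
  proof -
    show "p (a + b) = p a + p b"
    proof (rule pch[symmetric])
      show "p a + p b \<in> V" using p1 sV(1) subspace_add by blast
      show "(a + b - (p a + p b)) \<bullet> w = 0" if "w \<in> V" for w
        using p2[OF that, of a] p2[OF that, of b] by (simp add: algebra_simps inner_diff_left inner_add_left)
    qed
    show "p (c *\<^sub>R a) = c *\<^sub>R p a"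
    proof (rule pch[symmetric])
      show "c *\<^sub>R p a \<in> V" using p1 sV(1) subspace_scale by blast
      show "(c *\<^sub>R a - c *\<^sub>R p a) \<bullet> w = 0" if "w \<in> V" for w
        using p2[OF that, of a] by (simp add: scaleR_diff_right[symmetric] inner_diff_left)
    qed
  qed
  have glin: "linear g"
  proof (rule linearI)
    fix a b :: "real^'m" and c :: real
    show "g (a + b) = g a + g b"
      by (rule gch[symmetric]) (use g1 g2 subspace_add[OF sV(2) g1 g1] plin in \<open>auto simp: matrix_vector_right_distrib\<close>)
    show "g (c *\<^sub>R a) = c *\<^sub>R g a"
      by (rule gch[symmetric]) (use g1 g2 subspace_scale[OF sV(2) g1] plin in \<open>auto simp: linear_simps matrix_vector_mul_linear\<close>)
  qed
  define G where "G = matrix g"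
  have Gv: "G *v y = g y" for y unfolding G_def using glin by simp
  have pV: "p v = v" if "v \<in> V" for v using pch[OF that] by simp
  have gA: "g (A *v x) = r x" for x
    using gch[of "r x" "A *v x"] r1 Ar pV[of "A *v x"] unfolding V_def by auto
  have gp: "g (p y) = g y" for y using gch[of "g y" "p y"] g1 g2 pV[OF p1[of y]] by simp
  have rS: "r s = s" if "s \<in> S" for s using rch[OF that] by simp
  show ?thesis
  proof (intro exI[of _ G], unfold penrose_def, intro conjI)
    show "A ** G ** A = A"
      by (subst matrix_eq, simp add: matrix_vector_mul_assoc[symmetric] Gv gA Ar)
    show "G ** A ** G = G"
      by (subst matrix_eq, simp add: matrix_vector_mul_assoc[symmetric] Gv gA g2 gp)
    show "transpose (A ** G) = A ** G"
      by (rule sym_by_inner) (simp add: matrix_vector_mul_assoc[symmetric] Gv g2 proj_sym[OF p1 p2])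
    show "transpose (G ** A) = G ** A"
      by (rule sym_by_inner) (simp add: matrix_vector_mul_assoc[symmetric] Gv gA proj_sym[OF r1 r2])
  qed
qed
lemma penrose_unique:
  fixes A :: "real^'n^'m"
  assumes "penrose A G1" "penrose A G2"
  shows "G1 = G2"
proof -
  have a1: "A ** G1 ** A = A" "G1 ** A ** G1 = G1" "transpose (A ** G1) = A ** G1" "transpose (G1 ** A) = G1 ** A"
    using assms(1) unfolding penrose_def by auto
  have a2: "A ** G2 ** A = A" "G2 ** A ** G2 = G2" "transpose (A ** G2) = A ** G2" "transpose (G2 ** A) = G2 ** A"
    using assms(2) unfolding penrose_def by auto
  have tA1: "transpose A = transpose A ** A ** G2"
  proof -
    have "transpose A = transpose (A ** G2 ** A)" using a2 by simp
    also have "\<dots> = transpose A ** transpose (A ** G2)" by (simp add: matrix_transpose_mul)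
    also have "\<dots> = transpose A ** A ** G2" using a2 by (simp add: matrix_mul_assoc)
    finally show ?thesis .
  qed
  have tA2: "transpose A = G1 ** A ** transpose A"
  proof -
    have "transpose A = transpose (A ** G1 ** A)" using a1 by simp
    also have "\<dots> = transpose (G1 ** A) ** transpose A" by (simp add: matrix_transpose_mul matrix_mul_assoc)
    also have "\<dots> = G1 ** A ** transpose A" using a1 by simp
    finally show ?thesis .
  qed
  have "G1 = G1 ** (A ** G1)" using a1 by (simp add: matrix_mul_assoc)
  also have "\<dots> = G1 ** transpose (A ** G1)" using a1 by simp
  also have "\<dots> = G1 ** transpose G1 ** transpose A" by (simp add: matrix_transpose_mul matrix_mul_assoc)
  also have "\<dots> = G1 ** transpose G1 ** (transpose A ** A ** G2)" using tA1 by metis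
  also have "\<dots> = G1 ** transpose (A ** G1) ** A ** G2" by (simp add: matrix_transpose_mul matrix_mul_assoc)
  also have "\<dots> = G1 ** A ** G1 ** A ** G2" using a1 by (simp add: matrix_mul_assoc)
  also have "\<dots> = G1 ** A ** G2" using a1 by simp
  finally have e1: "G1 = G1 ** A ** G2" .
  have "G2 = (G2 ** A) ** G2" using a2 by simp
  also have "\<dots> = transpose (G2 ** A) ** G2" using a2 by simp
  also have "\<dots> = transpose A ** transpose G2 ** G2" by (simp add: matrix_transpose_mul)
  also have "\<dots> = (G1 ** A ** transpose A) ** transpose G2 ** G2" using tA2 by metis
  also have "\<dots> = G1 ** A ** transpose (G2 ** A) ** G2" by (simp add: matrix_transpose_mul matrix_mul_assoc)
  also have "\<dots> = G1 ** A ** (G2 ** A ** G2)" by (simp add: a2(4) matrix_mul_assoc)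
  also have "\<dots> = G1 ** A ** G2" using a2 by simp
  finally show ?thesis using e1 by simp
qed

lemma mp_penrose: "penrose A (mp_inverse A)"
proof -
  have "\<exists>!G. penrose A G" using penrose_exists penrose_unique by blast
  then have "penrose A (THE G. penrose A G)" by (rule theI')
  then show ?thesis unfolding mp_inverse_def penrose_def[abs_def] by simp
qed

lemma mp_sym:
  fixes A :: "real^'n^'n"
  assumes "transpose A = A"
  shows "transpose (mp_inverse A) = mp_inverse A"
proof -
  define G where "G = mp_inverse A"
  have a: "A ** G ** A = A" "G ** A ** G = G" "transpose (A ** G) = A ** G" "transpose (G ** A) = G ** A"
    using mp_penrose[of A] unfolding penrose_def G_def by auto
  have "penrose A (transpose G)"
    unfolding penrose_def
  proof (intro conjI)
    show "A ** transpose G ** A = A"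
      by (metis a(1) assms matrix_transpose_mul matrix_mul_assoc)
    show "transpose G ** A ** transpose G = transpose G"
      by (metis a(2) assms matrix_transpose_mul matrix_mul_assoc)
    show "transpose (A ** transpose G) = A ** transpose G"
      by (metis a(4) assms matrix_transpose_mul transpose_transpose)
    show "transpose (transpose G ** A) = transpose G ** A"
      by (metis a(3) assms matrix_transpose_mul transpose_transpose)
  qed
  then show ?thesis using penrose_unique mp_penrose unfolding G_def by blast
qed

lemma inner_mv: "(x::real^'m) \<bullet> (A *v y) = (transpose A *v x) \<bullet> y"
  by (simp add: dot_lmul_matrix)

lemma quad_zero:
  fixes a b :: real
  assumes "b \<ge> 0" "\<And>t. 0 \<le> 2*t*a + t^2*b"
  shows "a = 0"
proof -
  define c where "c = b + 1"
  have c: "c > 0" using assms(1) c_def by simp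
  define t where "t = -a/c"
  have "(2*t*a + t^2*b) * c^2 = -2*a^2*c + a^2*b"
    unfolding t_def using c by (simp add: field_simps power2_eq_square)
  moreover have "0 \<le> (2*t*a + t^2*b) * c^2" using assms(2) by simp
  ultimately have "0 \<le> a^2 * (b - 2*c)" by (simp add: algebra_simps)
  moreover have "b - 2*c < 0" using c_def assms(1) by simp
  ultimately show ?thesis
    using mult_pos_neg[of "a^2" "b - 2*c"] by (cases "a = 0") auto
qed

lemma psd_null:
  fixes S :: "real^'n^'n"
  assumes sym: "transpose S = S" and psd: "\<And>x. 0 \<le> x \<bullet> (S *v x)" and w: "w \<bullet> (S *v w) = 0"
  shows "S *v w = 0"
proof -
  define y where "y = S *v w"
  have sw: "w \<bullet> (S *v y) = y \<bullet> y" unfolding y_def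
    by (metis inner_commute inner_mv sym)
  have "0 \<le> 2*t*(y \<bullet> y) + t^2*(y \<bullet> (S *v y))" for t
  proof -
    have "0 \<le> (w + t *\<^sub>R y) \<bullet> (S *v (w + t *\<^sub>R y))" by (rule psd)
    also have "\<dots> = w \<bullet> (S *v w) + t * (w \<bullet> (S *v y)) + t * (y \<bullet> (S *v w)) + t^2 * (y \<bullet> (S *v y))"
      by (simp add: matrix_vector_right_distrib matrix_vector_mult_scaleR inner_add_left inner_add_right power2_eq_square algebra_simps)
    also have "\<dots> = 2*t*(y \<bullet> y) + t^2*(y \<bullet> (S *v y))"
      using w sw by (simp add: y_def)
    finally show ?thesis .
  qed
  then have "y \<bullet> y = 0" using quad_zero psd by blast
  then show ?thesis unfolding y_def by simp
qed

lemma key_range: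
  fixes Sg :: "real^'p^'p" and Z :: "real^'p^'q"
  assumes sym: "transpose Sg = Sg" and psd: "\<And>x. 0 \<le> x \<bullet> (Sg *v x)"
    and B: "B = Z ** Sg ** transpose Z" and BGB: "B ** G ** B = B"
  shows "Sg ** transpose Z ** G ** B = Sg ** transpose Z"
proof (subst matrix_eq, intro allI)
  fix x
  define e where "e = x - G *v (B *v x)"
  have Be: "B *v e = 0"
    proof -
    have "B ** (G ** B) = B" using BGB by (simp add: matrix_mul_assoc)
    then show ?thesis unfolding e_def by (simp add: matrix_vector_mult_diff_distrib matrix_vector_mul_assoc)
  qed
  define w where "w = transpose Z *v e"
  have "w \<bullet> (Sg *v w) = e \<bullet> (B *v e)"
    unfolding w_def B by (simp add: inner_mv matrix_vector_mul_assoc[symmetric])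
  then have "Sg *v w = 0" using psd_null[OF sym psd] Be by simp
  then have "Sg *v (transpose Z *v x) - Sg *v (transpose Z *v (G *v (B *v x))) = 0"
    unfolding w_def e_def by (simp only: matrix_vector_mult_diff_distrib)
  then show "Sg ** transpose Z ** G ** B *v x = Sg ** transpose Z *v x"
    by (simp only: matrix_vector_mul_assoc[symmetric] right_minus_eq)
qed

lemma mp_psd:
  fixes D :: "real^'n^'n"
  assumes sym: "transpose D = D" and psd: "\<And>x. 0 \<le> x \<bullet> (D *v x)"
  shows "0 \<le> x \<bullet> (mp_inverse D *v x)"
proof -
  define Q where "Q = mp_inverse D"
  have Q: "Q ** D ** Q = Q" "transpose Q = Q"
    using mp_penrose[of D] mp_sym[OF sym] unfolding penrose_def Q_def by auto
  have "x \<bullet> (Q *v x) = x \<bullet> (Q *v (D *v (Q *v x)))"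
    by (metis Q(1) matrix_vector_mul_assoc)
  also have "\<dots> = (Q *v x) \<bullet> (D *v (Q *v x))" by (metis inner_mv Q(2))
  also have "\<dots> \<ge> 0" by (rule psd)
  finally show ?thesis unfolding Q_def .
qed

lemma final_id:
  fixes Sg :: "real^'p^'p" and Z :: "real^'p^'q" and C :: "real^'q^'q"
  assumes sym: "transpose Sg = Sg" and psd: "\<And>x. 0 \<le> x \<bullet> (Sg *v x)"
    and Csym: "transpose C = C"
    and K: "K = Sg ** transpose Z ** mp_inverse C"
    and B: "B = Z ** Sg ** transpose Z"
    and A0: "A0 = Sg ** transpose Z ** mp_inverse B"
  shows "Z ** (K ** (Z ** Sg)) = Z ** (K ** (C ** (transpose K ** (transpose Z ** transpose A0))))"
proof -
  define H where "H = mp_inverse C"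
  define G where "G = mp_inverse B"
  have Bsym: "transpose B = B" unfolding B using sym by (simp add: matrix_transpose_mul matrix_mul_assoc)
  have H: "H ** C ** H = H" "transpose H = H"
    using mp_penrose[of C] mp_sym[OF Csym] unfolding penrose_def H_def by auto
  have G: "B ** G ** B = B" "transpose G = G"
    using mp_penrose[of B] mp_sym[OF Bsym] unfolding penrose_def G_def by auto
  have k: "Sg ** transpose Z ** G ** B = Sg ** transpose Z" by (rule key_range[OF sym psd B G(1)])
  have k2: "B ** G ** Z ** Sg = Z ** Sg"
  proof -
    have "transpose (Sg ** transpose Z ** G ** B) = transpose (Sg ** transpose Z)" using k by simp
    then show ?thesis using sym G(2) Bsym by (simp add: matrix_transpose_mul matrix_mul_assoc)
  qed
  have hch: "H ** (C ** (H ** X)) = H ** X" for X :: "real^'c^'q"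
    using H(1) by (metis matrix_mul_assoc)
  have k3: "Z ** (Sg ** (transpose Z ** (G ** (Z ** Sg)))) = Z ** Sg"
    using k2 unfolding B by (simp add: matrix_mul_assoc)
  have tK: "transpose K = H ** (Z ** Sg)" unfolding K H_def[symmetric]
    using sym H(2) by (simp add: matrix_transpose_mul matrix_mul_assoc)
  have tA: "transpose A0 = G ** (Z ** Sg)" unfolding A0 G_def[symmetric]
    using sym G(2) by (simp add: matrix_transpose_mul matrix_mul_assoc)
  show ?thesis unfolding tK tA unfolding K H_def[symmetric]
    by (simp add: matrix_mul_assoc[symmetric] hch k3)
qed



definition L2r :: "'a measure \<Rightarrow> ('a \<Rightarrow> real) \<Rightarrow> bool" where
  "L2r M f \<longleftrightarrow> f \<in> borel_measurable M \<and> integrable M (\<lambda>\<omega>. (f \<omega>)^2)"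

definition L2v :: "'a measure \<Rightarrow> ('a \<Rightarrow> real^'n) \<Rightarrow> bool" where
  "L2v M U \<longleftrightarrow> (\<forall>i. L2r M (\<lambda>\<omega>. U \<omega> $ i))"

definition cm :: "'a measure \<Rightarrow> ('a \<Rightarrow> real^'n) \<Rightarrow> ('a \<Rightarrow> real^'m) \<Rightarrow> real^'m^'n" where
  "cm M U V = (\<chi> i j. \<integral>\<omega>. U \<omega> $ i * V \<omega> $ j \<partial>M)"

lemma L2r_mult:
  assumes "L2r M f" "L2r M g" shows "integrable M (\<lambda>\<omega>. f \<omega> * g \<omega>)"
proof (rule Bochner_Integration.integrable_bound)
  show "integrable M (\<lambda>\<omega>. (f \<omega>)\<^sup>2 + (g \<omega>)\<^sup>2)" using assms unfolding L2r_def by simp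
  show "(\<lambda>\<omega>. f \<omega> * g \<omega>) \<in> borel_measurable M" using assms unfolding L2r_def by (auto intro!: borel_measurable_times)
  show "AE x in M. norm (f x * g x) \<le> norm ((f x)\<^sup>2 + (g x)\<^sup>2)"
  proof (rule AE_I2)
    fix x
    have "0 \<le> (\<bar>f x\<bar> - \<bar>g x\<bar>)^2" by simp
    then have "2 * (\<bar>f x\<bar> * \<bar>g x\<bar>) \<le> \<bar>f x\<bar>^2 + \<bar>g x\<bar>^2"
      by (simp add: power2_eq_square algebra_simps)
    moreover have "0 \<le> \<bar>f x\<bar> * \<bar>g x\<bar>" by simp
    ultimately have "\<bar>f x * g x\<bar> \<le> (f x)\<^sup>2 + (g x)\<^sup>2"
      unfolding abs_mult power2_abs by linarith
    then show "norm (f x * g x) \<le> norm ((f x)\<^sup>2 + (g x)\<^sup>2)" by simp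
  qed
qed

lemma L2r_add: assumes "L2r M f" "L2r M g" shows "L2r M (\<lambda>\<omega>. f \<omega> + g \<omega>)"
proof -
  have "integrable M (\<lambda>\<omega>. (f \<omega>)^2 + 2 * (f \<omega> * g \<omega>) + (g \<omega>)^2)"
    using assms L2r_mult[OF assms] unfolding L2r_def by simp
  moreover have "(\<lambda>\<omega>. (f \<omega> + g \<omega>)^2) = (\<lambda>\<omega>. (f \<omega>)^2 + 2 * (f \<omega> * g \<omega>) + (g \<omega>)^2)"
    by (simp add: power2_sum mult.assoc add_ac)
  moreover have "(\<lambda>\<omega>. f \<omega> + g \<omega>) \<in> borel_measurable M" using assms unfolding L2r_def by auto
  ultimately show ?thesis unfolding L2r_def by simp
qed

lemma L2r_cmult: assumes "L2r M f" shows "L2r M (\<lambda>\<omega>. c * f \<omega>)"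
  using assms unfolding L2r_def by (auto simp: power_mult_distrib)

lemma L2r_diff: assumes "L2r M f" "L2r M g" shows "L2r M (\<lambda>\<omega>. f \<omega> - g \<omega>)"
  using L2r_add[OF assms(1) L2r_cmult[OF assms(2), of "-1"]] by simp

lemma L2r_zero: "L2r M (\<lambda>\<omega>. 0)"
  unfolding L2r_def by simp


lemma L2r_sum: assumes "\<And>i. i \<in> I \<Longrightarrow> L2r M (f i)" shows "L2r M (\<lambda>\<omega>. \<Sum>i\<in>I. f i \<omega>)"
proof (cases "finite I")
  case True
  then show ?thesis using assms
  proof (induction I rule: finite_induct)
    case empty then show ?case by (simp add: L2r_zero)
  next
    case (insert x F)
    have "L2r M (\<lambda>\<omega>. f x \<omega> + (\<Sum>i\<in>F. f i \<omega>))"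
      by (rule L2r_add) (use insert in auto)
    then show ?case using insert by simp
  qed
qed (simp add: L2r_zero)

lemma L2v_mv: assumes "L2v M U" shows "L2v M (\<lambda>\<omega>. R *v U \<omega>)"
  unfolding L2v_def
proof
  fix i
  have "L2r M (\<lambda>\<omega>. \<Sum>j\<in>UNIV. R $ i $ j * U \<omega> $ j)"
    by (rule L2r_sum, rule L2r_cmult) (use assms in \<open>simp add: L2v_def\<close>)
  then show "L2r M (\<lambda>\<omega>. (R *v U \<omega>) $ i)" by (simp add: matrix_vector_mult_def)
qed

lemma L2v_add: assumes "L2v M U" "L2v M V" shows "L2v M (\<lambda>\<omega>. U \<omega> + V \<omega>)"
  using assms unfolding L2v_def by (auto intro!: L2r_add)

lemma L2v_diff: assumes "L2v M U" "L2v M V" shows "L2v M (\<lambda>\<omega>. U \<omega> - V \<omega>)"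
  using assms unfolding L2v_def by (auto intro!: L2r_diff)

lemma L2v_int: assumes "L2v M U" "L2v M V" shows "integrable M (\<lambda>\<omega>. U \<omega> $ i * V \<omega> $ j)"
  using assms unfolding L2v_def by (auto intro!: L2r_mult)



lemma cm_mv_left:
  assumes "L2v M U" "L2v M V"
  shows "cm M (\<lambda>\<omega>. R *v U \<omega>) V = R ** cm M U V"
proof -
  have "(\<integral>\<omega>. (\<Sum>k\<in>UNIV. R $ i $ k * U \<omega> $ k) * V \<omega> $ j \<partial>M) = (\<Sum>k\<in>UNIV. R $ i $ k * (\<integral>\<omega>. U \<omega> $ k * V \<omega> $ j \<partial>M))" for i j
  proof -
    have "(\<integral>\<omega>. (\<Sum>k\<in>UNIV. R $ i $ k * U \<omega> $ k) * V \<omega> $ j \<partial>M) = (\<integral>\<omega>. (\<Sum>k\<in>UNIV. R $ i $ k * (U \<omega> $ k * V \<omega> $ j)) \<partial>M)"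
      by (simp add: sum_distrib_right mult.assoc)
    also have "\<dots> = (\<Sum>k\<in>UNIV. (\<integral>\<omega>. R $ i $ k * (U \<omega> $ k * V \<omega> $ j) \<partial>M))"
      by (rule Bochner_Integration.integral_sum) (use L2v_int[OF assms] in auto)
    finally show ?thesis by simp
  qed
  note c = this
  show ?thesis
  proof (subst vec_eq_iff, intro allI, subst vec_eq_iff, intro allI)
    fix i j
    have "cm M (\<lambda>\<omega>. R *v U \<omega>) V $ i $ j = (\<integral>\<omega>. (\<Sum>k\<in>UNIV. R $ i $ k * U \<omega> $ k) * V \<omega> $ j \<partial>M)"
      by (simp add: cm_def matrix_vector_mult_def)
    also have "\<dots> = (\<Sum>k\<in>UNIV. R $ i $ k * cm M U V $ k $ j)" unfolding c by (simp add: cm_def)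
    also have "\<dots> = (R ** cm M U V) $ i $ j" by (simp add: matrix_matrix_mult_def)
    finally show "cm M (\<lambda>\<omega>. R *v U \<omega>) V $ i $ j = (R ** cm M U V) $ i $ j" .
  qed
qed

lemma cm_trans: "cm M V U = transpose (cm M U V)"
  unfolding cm_def transpose_def by (simp add: vec_eq_iff mult.commute)

lemma cm_mv_right:
  assumes "L2v M U" "L2v M V"
  shows "cm M U (\<lambda>\<omega>. R *v V \<omega>) = cm M U V ** transpose R"
proof -
  have "cm M U (\<lambda>\<omega>. R *v V \<omega>) = transpose (cm M (\<lambda>\<omega>. R *v V \<omega>) U)" by (rule cm_trans)
  also have "\<dots> = transpose (R ** cm M V U)" by (simp only: cm_mv_left[OF assms(2,1)])
  also have "\<dots> = transpose (cm M V U) ** transpose R" by (simp only: matrix_transpose_mul)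
  also have "transpose (cm M V U) = cm M U V" by (simp only: cm_trans[of M U V] transpose_transpose)
  finally show ?thesis .
qed

lemma cm_add_left:
  assumes "L2v M U" "L2v M U'" "L2v M V"
  shows "cm M (\<lambda>\<omega>. U \<omega> + U' \<omega>) V = cm M U V + cm M U' V"
  unfolding cm_def using L2v_int[OF assms(1,3)] L2v_int[OF assms(2,3)]
  by (simp add: vec_eq_iff distrib_right)

lemma cm_diff_right:
  assumes "L2v M U" "L2v M V" "L2v M V'"
  shows "cm M U (\<lambda>\<omega>. V \<omega> - V' \<omega>) = cm M U V - cm M U V'"
  unfolding cm_def using L2v_int[OF assms(1,2)] L2v_int[OF assms(1,3)]
  by (simp add: vec_eq_iff right_diff_distrib)

lemma inner_int:
  assumes "L2v M U" "L2v M V"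
  shows "integrable M (\<lambda>\<omega>. U \<omega> \<bullet> V \<omega>)" "(\<integral>\<omega>. U \<omega> \<bullet> V \<omega> \<partial>M) = (\<Sum>i\<in>UNIV. cm M U V $ i $ i)"
proof -
  have e: "(\<lambda>\<omega>. U \<omega> \<bullet> V \<omega>) = (\<lambda>\<omega>. \<Sum>i\<in>UNIV. U \<omega> $ i * V \<omega> $ i)"
    by (simp add: inner_vec_def)
  show "integrable M (\<lambda>\<omega>. U \<omega> \<bullet> V \<omega>)" unfolding e using L2v_int[OF assms] by auto
  show "(\<integral>\<omega>. U \<omega> \<bullet> V \<omega> \<partial>M) = (\<Sum>i\<in>UNIV. cm M U V $ i $ i)"
    unfolding e cm_def using L2v_int[OF assms] by (simp add: integral_sum)
qed



lemma comp_meas: "U \<in> borel_measurable M \<Longrightarrow> (\<lambda>\<omega>. U \<omega> $ i) \<in> borel_measurable M"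
  for U :: "'a \<Rightarrow> real^'n"
  by (rule borel_measurable_continuous_on[OF continuous_on_component[OF continuous_on_id]])

lemma L2_vec_L2v: "L2_vec M U \<Longrightarrow> L2v M U"
  unfolding L2_vec_def L2v_def L2r_def using comp_meas by blast

lemma nth_meas: "(\<lambda>x::real^'n. x $ i) \<in> borel_measurable borel"
  by (rule borel_measurable_continuous_onI[OF continuous_on_component[OF continuous_on_id]])

lemma indep_cm:
  fixes X :: "'a \<Rightarrow> real^'p" and \<epsilon> :: "'a \<Rightarrow> real^'q"
  assumes P: "prob_space M"
    and LX: "L2_vec M X" and mX: "\<forall>i. integral\<^sup>L M (\<lambda>\<omega>. X \<omega> $ i) = 0"
    and Le: "L2_vec M \<epsilon>" and me: "\<forall>i. integral\<^sup>L M (\<lambda>\<omega>. \<epsilon> \<omega> $ i) = 0"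
    and ind: "prob_space.indep_set M {X -` A \<inter> space M |A. A \<in> sets borel}
                            {\<epsilon> -` A \<inter> space M |A. A \<in> sets borel}"
  shows "cm M \<epsilon> X = 0"
proof -
  interpret prob_space M by (rule P)
  have "(\<integral>\<omega>. \<epsilon> \<omega> $ i * X \<omega> $ j \<partial>M) = 0" for i j
  proof -
    have sub: "{(\<lambda>\<omega>. U \<omega> $ k) -` A \<inter> space M |A. A \<in> sets borel} \<subseteq> {U -` A \<inter> space M |A. A \<in> sets borel}"
      for U :: "'a \<Rightarrow> real^'c" and k
    proof
      fix S assume "S \<in> {(\<lambda>\<omega>. U \<omega> $ k) -` A \<inter> space M |A. A \<in> sets borel}"
      then obtain A where A: "A \<in> sets borel" "S = (\<lambda>\<omega>. U \<omega> $ k) -` A \<inter> space M" by blast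
      have "(\<lambda>x::real^'c. x $ k) -` A \<inter> space borel \<in> sets borel"
        using measurable_sets[OF nth_meas A(1)] .
      then have "(\<lambda>x::real^'c. x $ k) -` A \<in> sets borel" by simp
      moreover have "S = U -` ((\<lambda>x::real^'c. x $ k) -` A) \<inter> space M" using A(2) by auto
      ultimately show "S \<in> {U -` A \<inter> space M |A. A \<in> sets borel}" by blast
    qed
    have iv2: "indep_var borel (\<lambda>\<omega>. X \<omega> $ j) borel (\<lambda>\<omega>. \<epsilon> \<omega> $ i)"
      unfolding indep_var_def indep_vars_def2
    proof
      show "\<forall>b\<in>UNIV. random_variable (case_bool borel borel b) (case_bool (\<lambda>\<omega>. X \<omega> $ j) (\<lambda>\<omega>. \<epsilon> \<omega> $ i) b)"
        using LX Le comp_meas unfolding L2_vec_def by (auto split: bool.split intro!: comp_meas)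
      have "indep_sets (case_bool {X -` A \<inter> space M |A. A \<in> sets borel}
                              {\<epsilon> -` A \<inter> space M |A. A \<in> sets borel}) UNIV"
        using ind unfolding indep_set_def .
      then show "indep_sets (\<lambda>b. {case_bool (\<lambda>\<omega>. X \<omega> $ j) (\<lambda>\<omega>. \<epsilon> \<omega> $ i) b -` A \<inter> space M |A. A \<in> sets (case_bool borel borel b)}) UNIV"
        apply (rule indep_sets_mono_sets)
        apply (rename_tac b, case_tac b)
         apply (simp_all only: bool.case sub)
        done
    qed
    have iX: "integrable M (\<lambda>\<omega>. X \<omega> $ j)"
      using LX unfolding L2_vec_def by (intro square_integrable_imp_integrable[OF comp_meas]) auto
    have ie: "integrable M (\<lambda>\<omega>. \<epsilon> \<omega> $ i)"
      using Le unfolding L2_vec_def by (intro square_integrable_imp_integrable[OF comp_meas]) auto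
    have "(\<integral>\<omega>. X \<omega> $ j * \<epsilon> \<omega> $ i \<partial>M) = 0"
      using indep_var_lebesgue_integral[OF iv2 iX ie] mX by simp
    then show ?thesis by (simp add: mult.commute)
  qed
  then show ?thesis unfolding cm_def by (simp add: vec_eq_iff)
qed

lemma cov_cm:
  assumes "\<forall>i. integral\<^sup>L M (\<lambda>\<omega>. U \<omega> $ i) = 0"
  shows "cov_mat M U = cm M U U"
  using assms unfolding cov_mat_def cm_def by simp

lemma inner_sum_eq: "(x::real^'n) \<bullet> y = (\<Sum>i\<in>UNIV. x $ i * y $ i)"
  by (simp add: inner_vec_def)

lemma int_lin:
  assumes "\<And>j. integrable M (f j)"
  shows "(\<integral>\<omega>. (\<Sum>j\<in>UNIV. (c j::real) * f j \<omega>) \<partial>M) = (\<Sum>j\<in>UNIV. c j * integral\<^sup>L M (f j))"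
  by (subst Bochner_Integration.integral_sum) (use assms in auto)

lemma cm_psd:
  assumes "L2v M U"
  shows "0 \<le> x \<bullet> (cm M U U *v x)"
proof -
  have Ui: "L2r M (\<lambda>\<omega>. U \<omega> $ i)" for i using assms unfolding L2v_def by blast
  define s where "s \<omega> = (\<Sum>j\<in>UNIV. x $ j * U \<omega> $ j)" for \<omega>
  have sL: "L2r M s" unfolding s_def by (intro L2r_sum L2r_cmult Ui)
  have e1: "(\<integral>\<omega>. U \<omega> $ i * s \<omega> \<partial>M) = (cm M U U *v x) $ i" for i
  proof -
    have "(\<integral>\<omega>. U \<omega> $ i * s \<omega> \<partial>M) = (\<integral>\<omega>. (\<Sum>j\<in>UNIV. x $ j * (U \<omega> $ i * U \<omega> $ j)) \<partial>M)"
      unfolding s_def by (simp add: sum_distrib_left mult.left_commute)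
    also have "\<dots> = (\<Sum>j\<in>UNIV. x $ j * (\<integral>\<omega>. U \<omega> $ i * U \<omega> $ j \<partial>M))"
      by (rule int_lin) (intro L2r_mult Ui)
    finally show ?thesis by (simp add: cm_def matrix_vector_mult_def mult.commute)
  qed
  have "(\<integral>\<omega>. s \<omega> * s \<omega> \<partial>M) = (\<integral>\<omega>. (\<Sum>i\<in>UNIV. x $ i * (U \<omega> $ i * s \<omega>)) \<partial>M)"
    unfolding s_def by (simp add: sum_distrib_right mult.assoc)
  also have "\<dots> = (\<Sum>i\<in>UNIV. x $ i * (\<integral>\<omega>. U \<omega> $ i * s \<omega> \<partial>M))"
    by (rule int_lin) (intro L2r_mult Ui sL)
  also have "\<dots> = x \<bullet> (cm M U U *v x)" by (simp add: e1 inner_sum_eq)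
  finally have "x \<bullet> (cm M U U *v x) = (\<integral>\<omega>. s \<omega> * s \<omega> \<partial>M)" by simp
  also have "\<dots> \<ge> 0" by (rule integral_nonneg_AE) simp
  finally show ?thesis .
qed

lemma main:
  fixes M :: "'a measure"
    and X :: "'a \<Rightarrow> real^'p" and \<epsilon> :: "'a \<Rightarrow> real^'q"
    and Z :: "real^'p^'q" and D :: "real^'p^'p" and A :: "real^'q^'p"
  assumes P: "prob_space M"
    and LX: "L2_vec M X" and mX: "\<forall>i. integral\<^sup>L M (\<lambda>\<omega>. X \<omega> $ i) = 0"
    and Le: "L2_vec M \<epsilon>" and me: "\<forall>i. integral\<^sup>L M (\<lambda>\<omega>. \<epsilon> \<omega> $ i) = 0"
    and ind: "prob_space.indep_set M {X -` A \<inter> space M |A. A \<in> sets borel}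
                            {\<epsilon> -` A \<inter> space M |A. A \<in> sets borel}"
    and Dsym: "transpose D = D" and Dpd: "\<forall>x. x \<noteq> 0 \<longrightarrow> 0 < x \<bullet> (D *v x)"
    and Sg: "Sg = cov_mat M X"
    and Y: "Y = (\<lambda>\<omega>. Z *v X \<omega> + \<epsilon> \<omega>)"
    and C: "C = cov_mat M Y"
    and K: "K = Sg ** transpose Z ** mp_inverse C"
    and B: "B = Z ** Sg ** transpose Z"
    and A0: "A0 = Sg ** transpose Z ** mp_inverse B"
  shows "integral\<^sup>L M (\<lambda>\<omega>. Dnorm_sq D (X \<omega> - A0 *v (Z *v (K *v Y \<omega>))))
       \<le> integral\<^sup>L M (\<lambda>\<omega>. Dnorm_sq D (X \<omega> - A *v (Z *v (K *v Y \<omega>))))"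
proof -
  interpret prob_space M by (rule P)
  have LXv: "L2v M X" and Lev: "L2v M \<epsilon>" using LX Le by (auto intro: L2_vec_L2v)
  have LY: "L2v M Y" unfolding Y by (intro L2v_add L2v_mv LXv Lev)
  define W where "W \<omega> = Z *v (K *v Y \<omega>)" for \<omega>
  have LKY: "L2v M (\<lambda>\<omega>. K *v Y \<omega>)" by (intro L2v_mv LY)
  have LW: "L2v M W" unfolding W_def by (intro L2v_mv LKY)
  have intr: "integrable M f" if "L2r M f" for f
    using that unfolding L2r_def by (intro square_integrable_imp_integrable[of f]) simp_all
  have mY: "\<forall>i. integral\<^sup>L M (\<lambda>\<omega>. Y \<omega> $ i) = 0"
  proof
    fix i
    have iX: "integrable M (\<lambda>\<omega>. X \<omega> $ k)" for k using LXv intr unfolding L2v_def by blast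
    have ie: "integrable M (\<lambda>\<omega>. \<epsilon> \<omega> $ i)" using Lev intr unfolding L2v_def by blast
    have "(\<integral>\<omega>. Y \<omega> $ i \<partial>M) = (\<integral>\<omega>. (\<Sum>k\<in>UNIV. Z $ i $ k * X \<omega> $ k) + \<epsilon> \<omega> $ i \<partial>M)"
      unfolding Y by (simp add: matrix_vector_mult_def)
    also have "\<dots> = (\<integral>\<omega>. (\<Sum>k\<in>UNIV. Z $ i $ k * X \<omega> $ k) \<partial>M) + (\<integral>\<omega>. \<epsilon> \<omega> $ i \<partial>M)"
      by (rule Bochner_Integration.integral_add) (use iX ie in auto)
    also have "\<dots> = 0" using int_lin[of M "\<lambda>k \<omega>. X \<omega> $ k" "\<lambda>k. Z $ i $ k", OF iX] mX me by simp
    finally show "integral\<^sup>L M (\<lambda>\<omega>. Y \<omega> $ i) = 0" .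
  qed
  have SgX: "Sg = cm M X X" unfolding Sg by (rule cov_cm[OF mX])
  have CY: "C = cm M Y Y" unfolding C by (rule cov_cm[OF mY])
  have ceX: "cm M \<epsilon> X = 0" by (rule indep_cm[OF P LX mX Le me ind])
  have cYX: "cm M Y X = Z ** Sg"
  proof -
    have "cm M Y X = cm M (\<lambda>\<omega>. Z *v X \<omega>) X + cm M \<epsilon> X"
      unfolding Y by (rule cm_add_left) (intro L2v_mv LXv Lev)+
    then show ?thesis using ceX cm_mv_left[OF LXv LXv] SgX by simp
  qed
  have Sgsym: "transpose Sg = Sg" unfolding SgX using cm_trans[of M X X] by (metis transpose_transpose)
  have Sgpsd: "\<And>x. 0 \<le> x \<bullet> (Sg *v x)" unfolding SgX by (rule cm_psd[OF LXv])
  have Csym: "transpose C = C" unfolding CY using cm_trans[of M Y Y] by (metis transpose_transpose)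
  have fid: "Z ** (K ** (Z ** Sg)) = Z ** (K ** (C ** (transpose K ** (transpose Z ** transpose A0))))"
    by (rule final_id[OF Sgsym Sgpsd Csym K B A0])
  define u where "u \<omega> = X \<omega> - A0 *v W \<omega>" for \<omega>
  have Lu: "L2v M u" unfolding u_def by (intro L2v_diff L2v_mv LXv LW)
  have cWX: "cm M W X = Z ** (K ** (Z ** Sg))"
    unfolding W_def cm_mv_left[OF LKY LXv] cm_mv_left[OF LY LXv] cYX ..
  have cWY: "cm M W Y = Z ** (K ** C)"
    unfolding W_def cm_mv_left[OF LKY LY] cm_mv_left[OF LY LY] CY ..
  have cWW: "cm M W W = Z ** (K ** C) ** transpose K ** transpose Z"
  proof -
    have Weq: "W = (\<lambda>\<omega>. Z *v (K *v Y \<omega>))" by (simp add: fun_eq_iff W_def)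
    have "cm M W W = cm M W (\<lambda>\<omega>. Z *v (K *v Y \<omega>))" by (simp only: Weq[symmetric])
    also have "\<dots> = cm M W (\<lambda>\<omega>. K *v Y \<omega>) ** transpose Z" by (rule cm_mv_right[OF LW LKY])
    also have "cm M W (\<lambda>\<omega>. K *v Y \<omega>) = cm M W Y ** transpose K" by (rule cm_mv_right[OF LW LY])
    finally show ?thesis unfolding cWY .
  qed
  have cWu: "cm M W u = 0"
  proof -
    have "cm M W u = cm M W X - cm M W (\<lambda>\<omega>. A0 *v W \<omega>)"
      unfolding u_def by (rule cm_diff_right) (intro LW LXv L2v_mv)+
    also have "cm M W (\<lambda>\<omega>. A0 *v W \<omega>) = cm M W W ** transpose A0" by (rule cm_mv_right[OF LW LW])
    finally have "cm M W u = Z ** (K ** (Z ** Sg)) - Z ** (K ** C) ** transpose K ** transpose Z ** transpose A0"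
      unfolding cWX cWW .
    also have "Z ** (K ** C) ** transpose K ** transpose Z ** transpose A0
       = Z ** (K ** (C ** (transpose K ** (transpose Z ** transpose A0))))"
      by (simp add: matrix_mul_assoc)
    finally show ?thesis using fid by simp
  qed
  have cuW: "cm M u W = 0" unfolding cm_trans[of M u W] cWu by (simp add: transpose_def vec_eq_iff)
  define v where "v \<omega> = (A0 - A) *v W \<omega>" for \<omega>
  have Lv: "L2v M v" unfolding v_def by (intro L2v_mv LW)
  define Q where "Q = mp_inverse D"
  have Dpsd: "0 \<le> x \<bullet> (D *v x)" for x
    using Dpd by (cases "x = 0") (auto intro: less_imp_le)
  have Qpsd: "0 \<le> x \<bullet> (Q *v x)" for x unfolding Q_def by (rule mp_psd[OF Dsym Dpsd])
  have LQu: "L2v M (\<lambda>\<omega>. Q *v u \<omega>)" and LQv: "L2v M (\<lambda>\<omega>. Q *v v \<omega>)" by (intro L2v_mv Lu Lv)+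
  have cuv: "cm M u (\<lambda>\<omega>. Q *v v \<omega>) = 0"
    unfolding cm_mv_right[OF Lu Lv] unfolding v_def cm_mv_right[OF Lu LW] cuW by simp
  have cvu: "cm M v (\<lambda>\<omega>. Q *v u \<omega>) = 0"
    unfolding cm_mv_right[OF Lv Lu] unfolding v_def cm_mv_left[OF LW Lu] cWu by simp
  have eq0: "X \<omega> - A0 *v (Z *v (K *v Y \<omega>)) = u \<omega>" for \<omega> unfolding u_def W_def ..
  have eqA: "X \<omega> - A *v (Z *v (K *v Y \<omega>)) = u \<omega> + v \<omega>" for \<omega>
    unfolding u_def v_def W_def by (simp add: matrix_vector_mult_diff_rdistrib)
  have pt: "Dnorm_sq D (u \<omega> + v \<omega>) = u \<omega> \<bullet> (Q *v u \<omega>) + u \<omega> \<bullet> (Q *v v \<omega>) + v \<omega> \<bullet> (Q *v u \<omega>) + v \<omega> \<bullet> (Q *v v \<omega>)" for \<omega>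
    unfolding Dnorm_sq_def Q_def[symmetric] by (simp add: matrix_vector_right_distrib inner_add_left inner_add_right)
  note I1 = inner_int[OF Lu LQu] and I2 = inner_int[OF Lu LQv] and I3 = inner_int[OF Lv LQu] and I4 = inner_int[OF Lv LQv]
  have "integral\<^sup>L M (\<lambda>\<omega>. Dnorm_sq D (X \<omega> - A *v (Z *v (K *v Y \<omega>))))
      = (\<integral>\<omega>. u \<omega> \<bullet> (Q *v u \<omega>) \<partial>M) + (\<integral>\<omega>. u \<omega> \<bullet> (Q *v v \<omega>) \<partial>M) + (\<integral>\<omega>. v \<omega> \<bullet> (Q *v u \<omega>) \<partial>M) + (\<integral>\<omega>. v \<omega> \<bullet> (Q *v v \<omega>) \<partial>M)"
    unfolding eqA pt using I1(1) I2(1) I3(1) I4(1) by simp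
  also have "\<dots> = (\<integral>\<omega>. u \<omega> \<bullet> (Q *v u \<omega>) \<partial>M) + (\<integral>\<omega>. v \<omega> \<bullet> (Q *v v \<omega>) \<partial>M)"
    using I2(2) I3(2) cuv cvu by simp
  also have "\<dots> \<ge> (\<integral>\<omega>. u \<omega> \<bullet> (Q *v u \<omega>) \<partial>M)"
    using integral_nonneg_AE[of "\<lambda>\<omega>. v \<omega> \<bullet> (Q *v v \<omega>)" M] Qpsd by simp
  finally show ?thesis unfolding eq0 Dnorm_sq_def Q_def by simp
qed

theorem lemma2:
  fixes M :: "'a measure"
    and X :: "'a \<Rightarrow> real^'p" and \<epsilon> :: "'a \<Rightarrow> real^'q"
    and Z :: "real^'p^'q" and D :: "real^'p^'p"
  assumes "prob_space M"
    and "L2_vec M X" and "\<forall>i. integral\<^sup>L M (\<lambda>\<omega>. X \<omega> $ i) = 0"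
    and "L2_vec M \<epsilon>" and "\<forall>i. integral\<^sup>L M (\<lambda>\<omega>. \<epsilon> \<omega> $ i) = 0"
    and "prob_space.indep_set M {X -` A \<inter> space M |A. A \<in> sets borel}
                            {\<epsilon> -` A \<inter> space M |A. A \<in> sets borel}"
    and "transpose D = D" and "\<forall>x. x \<noteq> 0 \<longrightarrow> 0 < x \<bullet> (D *v x)"
  shows "let \<Sigma> = cov_mat M X;
             Y = (\<lambda>\<omega>. Z *v X \<omega> + \<epsilon> \<omega>);
             C = cov_mat M Y;
             K = \<Sigma> ** transpose Z ** mp_inverse C;
             B = Z ** \<Sigma> ** transpose Z;
             Z\<^sub>\<Sigma> = \<Sigma> ** transpose Z ** mp_inverse B;
             J = (\<lambda>A::real^'q^'p. integral\<^sup>L M (\<lambda>\<omega>. Dnorm_sq D (X \<omega> - A *v (Z *v (K *v Y \<omega>)))))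
         in \<forall>A. J Z\<^sub>\<Sigma> \<le> J A"
  unfolding Let_def by (intro allI main[OF assms refl refl refl refl refl refl])

end
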